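(* Let the network and parameters be as described in the context, let $T>0$, and let $u\in C^1([0,T];L^2(\mathcal{E}))\cap C^0([0,T];H^1(\mathcal{E})\cap H^2_{pw}(\mathcal{E}))$ satisfy, for all $0<t<T$, \begin{align*} a^e\partial_tu^e+b^e\partial_xu^e-\epsilon^e\partial_{xx}u^e&\ge0\quad\text{on } e,\ e\in\mathcal{E},\\ \sum_{e\in\mathcal{E}(v)}\epsilon^e\partial_xu^e(v)n^e(v)&=0,\quad v\in\mathcal{V}_0,\\ u(v)&\ge0,\quad v\in\mathcal{V}_\partial, \end{align*} and the initial condition $u^e(x,0)\ge0$ for $x\in e$, $e\in\mathcal{E}$. Then $u\ge0$ on $\mathcal{E}$ for all $t\in[0,T]$.
   Context: The network is a finite, directed, connected graph with vertices $\mathcal{V}$ and edges $\mathcal{E}\subset\mathcal{V}\times\mathcal{V}$. For an edge $e=(v_i,v_j)$ set $n^e(v_i)=-1$, $n^e(v_j)=1$, and $n^e(v)=0$ otherwise. $\mathcal{E}(v)=\{e:n^e(v)\neq0\}$; $\mathcal{V}_0=\{v:|\mathcal{E}(v)|\ge2\}$, $\mathcal{V}_\partial=\mathcal{V}\setminus\mathcal{V}_0$. Each edge $e$ has length $\ell^e>0$ and is identified with $(0,\ell^e)$, start vertex at $x=0$, end vertex at $x=\ell^e$; $u^e$ is the restriction to $e$, $u^e(v)$ its value at the endpoint corresponding to $v$. $L^2(\mathcal{E})=\prod_eL^2(e)$, $H^2_{pw}(\mathcal{E})=\{u:u^e\in H^2(e)\ \forall e\}$, and $H^1(\mathcal{E})$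 is the space of edgewise $H^1$ functions that are continuous across vertices (so $u(v)$ is well defined). Assumptions: on each edge $a^e,b^e,\epsilon^e$ are positive constants with $\epsilon^e\le1$, and $\sum_{e\in\mathcal{E}(v)}b^en^e(v)=0$ for all $v\in\mathcal{V}_0$. *)

theory Defs
  imports "HOL-Analysis.Analysis"
begin

definition network :: "'v set \<Rightarrow> ('v \<times> 'v) set \<Rightarrow> bool" where
  "network V E \<longleftrightarrow> finite V \<and> E \<subseteq> V \<times> V \<and> (\<forall>e\<in>E. fst e \<noteq> snd e)
     \<and> (\<forall>v\<in>V. \<forall>w\<in>V. (v, w) \<in> (E \<union> E\<inverse>)\<^sup>*)"

definition nE :: "('v \<times> 'v) \<Rightarrow> 'v \<Rightarrow> real" where
  "nE e v = (if v = fst e then -1 else if v = snd e then 1 else 0)"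

definition edges_at :: "('v \<times> 'v) set \<Rightarrow> 'v \<Rightarrow> ('v \<times> 'v) set" where
  "edges_at E v = {e \<in> E. nE e v \<noteq> 0}"

definition inner_vertices :: "'v set \<Rightarrow> ('v \<times> 'v) set \<Rightarrow> 'v set" where
  "inner_vertices V E = {v \<in> V. card (edges_at E v) \<ge> 2}"

definition bdry_vertices :: "'v set \<Rightarrow> ('v \<times> 'v) set \<Rightarrow> 'v set" where
  "bdry_vertices V E = V - inner_vertices V E"

text \<open>Value at vertex v of a function f on edge e = (0,l): start vertex is x = 0, end vertex x = l.\<close>
definition at_vertex :: "('v \<times> 'v) \<Rightarrow> real \<Rightarrow> (real \<Rightarrow> real) \<Rightarrow> 'v \<Rightarrow> real" where
  "at_vertex e l f v = (if v = fst e then f 0 else f l)"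

definition L2on :: "real \<Rightarrow> (real \<Rightarrow> real) \<Rightarrow> bool" where
  "L2on l g \<longleftrightarrow> set_borel_measurable lborel {0..l} g \<and>
     set_integrable lborel {0..l} (\<lambda>x. (g x)\<^sup>2)"

definition L2norm :: "real \<Rightarrow> (real \<Rightarrow> real) \<Rightarrow> real" where
  "L2norm l g = sqrt (set_lebesgue_integral lborel {0..l} (\<lambda>x. (g x)\<^sup>2))"

definition ac_deriv :: "real \<Rightarrow> (real \<Rightarrow> real) \<Rightarrow> (real \<Rightarrow> real) \<Rightarrow> bool" where
  "ac_deriv l f d \<longleftrightarrow> set_integrable lborel {0..l} d \<and>
     (\<forall>x\<in>{0..l}. f x = f 0 + set_lebesgue_integral lborel {0..x} d)"

text \<open>f (its continuous representative) lies in H^2(0,l), with first derivative fx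
  (continuous representative) and second weak derivative fxx.\<close>
definition H2_rep :: "real \<Rightarrow> (real \<Rightarrow> real) \<Rightarrow> (real \<Rightarrow> real) \<Rightarrow> (real \<Rightarrow> real) \<Rightarrow> bool" where
  "H2_rep l f fx fxx \<longleftrightarrow> ac_deriv l f fx \<and> ac_deriv l fx fxx \<and> L2on l fxx"

definition C0_H2 :: "real \<Rightarrow> (real \<Rightarrow> real \<Rightarrow> real) \<Rightarrow> (real \<Rightarrow> real \<Rightarrow> real)
    \<Rightarrow> (real \<Rightarrow> real \<Rightarrow> real) \<Rightarrow> real \<Rightarrow> bool" where
  "C0_H2 T U Ux Uxx l \<longleftrightarrow> (\<forall>t\<in>{0..T}.
     ((\<lambda>s. L2norm l (\<lambda>x. U s x - U t x) + L2norm l (\<lambda>x. Ux s x - Ux t x)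
           + L2norm l (\<lambda>x. Uxx s x - Uxx t x)) \<longlongrightarrow> 0) (at t within {0..T}))"

definition C1_L2 :: "real \<Rightarrow> (real \<Rightarrow> real \<Rightarrow> real) \<Rightarrow> (real \<Rightarrow> real \<Rightarrow> real) \<Rightarrow> real \<Rightarrow> bool" where
  "C1_L2 T U Ut l \<longleftrightarrow>
     (\<forall>t\<in>{0..T}. L2on l (U t) \<and> L2on l (Ut t)) \<and>
     (\<forall>t\<in>{0..T}. ((\<lambda>s. L2norm l (\<lambda>x. (U s x - U t x) / (s - t) - Ut t x)) \<longlongrightarrow> 0)
                   (at t within {0..T})) \<and>
     (\<forall>t\<in>{0..T}. ((\<lambda>s. L2norm l (\<lambda>x. Ut s x - Ut t x)) \<longlongrightarrow> 0) (at t within {0..T}))"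

end

theory Submission
  imports Defs
begin



definition Phi :: "real \<Rightarrow> real" where "Phi s = arctan (min s 0) - min s 0"
definition dPhi :: "real \<Rightarrow> real" where "dPhi s = 1 / (1 + (min s 0)\<^sup>2) - 1"
definition ddPhi :: "real \<Rightarrow> real" where "ddPhi s = - 2 * min s 0 / (1 + (min s 0)\<^sup>2)\<^sup>2"

lemma Phi_if: "Phi = (\<lambda>s. if s \<in> {..0} then arctan s - s else 0)"
  by (auto simp: Phi_def fun_eq_iff min_def)
lemma dPhi_if: "dPhi = (\<lambda>s. if s \<in> {..0} then 1 / (1 + s\<^sup>2) - 1 else 0)"
  by (auto simp: dPhi_def fun_eq_iff min_def)
lemma ddPhi_if: "ddPhi = (\<lambda>s. if s \<in> {..0} then - 2 * s / (1 + s\<^sup>2)\<^sup>2 else 0)"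
  by (auto simp: ddPhi_def fun_eq_iff min_def)

lemma onepsq: "(1::real) + x\<^sup>2 \<noteq> 0" "(1::real) + x * x \<noteq> 0" "(1::real) + x\<^sup>2 > 0"
proof -
  have "x * x \<ge> 0" by simp
  then show "(1::real) + x\<^sup>2 \<noteq> 0" "(1::real) + x * x \<noteq> 0" "(1::real) + x\<^sup>2 > 0"
    unfolding power2_eq_square by linarith+
qed

lemma cont_ddPhi: "continuous_on A ddPhi"
  unfolding ddPhi_def by (intro continuous_intros) (auto simp: onepsq)

lemma closure_lem: "closure {..(0::real)} \<inter> closure {0<..} = {0}"
  by auto

lemma Phi_deriv: "(Phi has_real_derivative dPhi x) (at x)"
proof -
  have "((\<lambda>s. if s \<in> {..0} then arctan s - s else 0) has_vector_derivative
     (if x \<in> {..0} then 1 / (1 + x\<^sup>2) - 1 else 0)) (at x within UNIV)"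
  proof (rule has_vector_derivative_If_within_closures[where T="{0<..}"])
    show "x \<in> {..0} \<union> {0<..}" by auto
    show "UNIV = {..0::real} \<union> {0<..}" by auto
    show "((\<lambda>s. arctan s - s) has_vector_derivative 1 / (1 + x\<^sup>2) - 1)
         (at x within {..0} \<union> closure {..0} \<inter> closure {0<..})"
      unfolding has_real_derivative_iff_has_vector_derivative[symmetric]
      by (auto intro!: derivative_eq_intros simp: power2_eq_square divide_inverse)
    show "((\<lambda>s. 0) has_vector_derivative 0) (at x within {0<..} \<union> closure {..0} \<inter> closure {0<..})"
      by (rule derivative_intros)
  qed (auto simp: closure_lem)
  then show ?thesis unfolding Phi_if dPhi_if has_real_derivative_iff_has_vector_derivative by simp
qed

lemma dPhi_deriv: "(dPhi has_real_derivative ddPhi x) (at x)"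
proof -
  have "((\<lambda>s. if s \<in> {..0} then 1 / (1 + s\<^sup>2) - 1 else 0) has_vector_derivative
     (if x \<in> {..0} then - 2 * x / (1 + x\<^sup>2)\<^sup>2 else 0)) (at x within UNIV)"
  proof (rule has_vector_derivative_If_within_closures[where T="{0<..}"])
    show "x \<in> {..0} \<union> {0<..}" by auto
    show "UNIV = {..0::real} \<union> {0<..}" by auto
    show "((\<lambda>s. 1 / (1 + s\<^sup>2) - 1) has_vector_derivative - 2 * x / (1 + x\<^sup>2)\<^sup>2)
         (at x within {..0} \<union> closure {..0} \<inter> closure {0<..})"
      unfolding has_real_derivative_iff_has_vector_derivative[symmetric]
      apply (rule derivative_eq_intros refl)+
      apply (auto simp: onepsq power2_eq_square field_simps)
      done
    show "((\<lambda>s. 0) has_vector_derivative 0) (at x within {0<..} \<union> closure {..0} \<inter> closure {0<..})"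
      by (rule derivative_intros)
  qed (auto simp: closure_lem)
  then show ?thesis unfolding ddPhi_if dPhi_if has_real_derivative_iff_has_vector_derivative by simp
qed

lemma ddPhi_nonneg: "ddPhi s \<ge> 0"
  unfolding ddPhi_def by (auto simp: min_def intro!: divide_nonpos_nonneg)

lemma dPhi_nonpos: "dPhi s \<le> 0"
  unfolding dPhi_def by (auto simp: min_def add_pos_nonneg)

lemma dPhi_ge: "dPhi s \<ge> -1"
  unfolding dPhi_def by (auto simp: min_def add_pos_nonneg)

lemma abs_dPhi: "\<bar>dPhi s\<bar> \<le> 1"
  using dPhi_nonpos[of s] dPhi_ge[of s] by auto

lemma dPhi_mono: "x \<le> y \<Longrightarrow> dPhi x \<le> dPhi y"
proof -
  assume "x \<le> y"
  have a: "(min y 0)\<^sup>2 \<le> (min x 0)\<^sup>2"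
    using \<open>x \<le> y\<close> unfolding abs_le_square_iff[symmetric] by (auto simp: min_def)
  show ?thesis unfolding dPhi_def
    by (intro diff_right_mono divide_left_mono) (use a in \<open>auto simp: onepsq intro!: mult_pos_pos\<close>)
qed

lemma Phi_zero: "s \<ge> 0 \<Longrightarrow> Phi s = 0" and dPhi_zero: "s \<ge> 0 \<Longrightarrow> dPhi s = 0"
  by (auto simp: Phi_def dPhi_def min_def)

lemma Phi_convex: "Phi y - Phi x \<le> dPhi y * (y - x)"
proof (cases x y rule: linorder_cases)
  case less
  from MVT2[OF less, of Phi dPhi] Phi_deriv obtain z where z: "x < z" "z < y" "Phi y - Phi x = (y - x) * dPhi z"
    by blast
  have "dPhi z \<le> dPhi y" using z by (intro dPhi_mono) simp
  then show ?thesis using z less by (simp add: mult.commute mult_left_mono)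
next
  case equal then show ?thesis by simp
next
  case greater
  from MVT2[OF greater, of Phi dPhi] Phi_deriv obtain z where z: "y < z" "z < x" "Phi x - Phi y = (x - y) * dPhi z"
    by blast
  have "dPhi y \<le> dPhi z" using z by (intro dPhi_mono) simp
  then have "(x - y) * dPhi y \<le> (x - y) * dPhi z" using greater by (simp add: mult_left_mono)
  then show ?thesis using z by (simp add: algebra_simps)
qed

lemma Phi_pos: assumes "s < 0" shows "Phi s > 0"
proof -
  from MVT2[OF assms, of Phi dPhi] Phi_deriv obtain z where z: "s < z" "z < 0" "Phi 0 - Phi s = (0 - s) * dPhi z"
    by blast
  have "z * z > 0" using z by (simp add: mult_neg_neg)
  then have "1 / (1 + z\<^sup>2) < 1" by (simp add: power2_eq_square)
  then have "dPhi z < 0" using z by (simp add: dPhi_def min_def)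
  moreover have "Phi 0 = 0" by (simp add: Phi_def)
  ultimately show ?thesis using z assms by (simp add: mult_neg_neg)
qed

lemma Phi_nonneg: "Phi s \<ge> 0"
  using Phi_pos[of s] Phi_zero[of s] by (cases "s < 0") auto

lemma Phi_eq0: "Phi s = 0 \<Longrightarrow> s \<ge> 0"
  using Phi_pos[of s] by (cases "s < 0") auto

lemma isCont_Phi: "isCont Phi x" by (rule DERIV_isCont[OF Phi_deriv])
lemma isCont_dPhi: "isCont dPhi x" by (rule DERIV_isCont[OF dPhi_deriv])
lemma isCont_ddPhi: "isCont ddPhi x"
  using cont_ddPhi[of UNIV] by (simp add: continuous_on_eq_continuous_at)



lemma ftc_lint:
  fixes g g' :: "real \<Rightarrow> real"
  assumes ab: "a \<le> b" and g: "\<And>x. x \<in> {a..b} \<Longrightarrow> (g has_real_derivative g' x) (at x within {a..b})"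
    and c: "continuous_on {a..b} g'"
  shows "(LINT x:{a..b}|lborel. g' x) = g b - g a"
proof -
  have "(g' has_integral (g b - g a)) {a..b}"
    using fundamental_theorem_of_calculus[OF ab, of g g'] g
    by (simp add: has_real_derivative_iff_has_vector_derivative)
  moreover have "(LINT x:{a..b}|lborel. g' x) = integral {a..b} g'"
    by (rule set_borel_integral_eq_integral(2)[OF borel_integrable_atLeastAtMost'[OF c]])
  ultimately show ?thesis by (simp add: integral_unique)
qed

lemma lint_eq_integral:
  fixes h :: "real \<Rightarrow> real"
  assumes "set_integrable lborel {a..b} h" "{c..d} \<subseteq> {a..b}"
  shows "(LINT x:{c..d}|lborel. h x) = integral {c..d} h" "h integrable_on {c..d}"
proof -
  have "set_integrable lborel {c..d} h"
    by (rule set_integrable_subset[OF assms(1) _ assms(2)]) simp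
  then show "(LINT x:{c..d}|lborel. h x) = integral {c..d} h" "h integrable_on {c..d}"
    using set_borel_integral_eq_integral by auto
qed

lemma ac_cont:
  fixes h H :: "real \<Rightarrow> real"
  assumes hi: "set_integrable lborel {0..l} h"
    and H: "\<forall>x\<in>{0..l}. H x = H 0 + (LINT y:{0..x}|lborel. h y)"
  shows "continuous_on {0..l} H"
proof -
  have hi': "h integrable_on {0..l}" using lint_eq_integral[OF hi, of 0 l] by simp
  have "continuous_on {0..l} (\<lambda>x. H 0 + integral {0..x} h)"
    by (intro continuous_intros indefinite_integral_continuous_1 hi')
  moreover have "\<forall>x\<in>{0..l}. H 0 + integral {0..x} h = H x"
  proof
    fix x assume x: "x \<in> {0..l}"
    then have "{0..x} \<subseteq> {0..l}" by auto
    from lint_eq_integral(1)[OF hi this] bspec[OF H x]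
    show "H 0 + integral {0..x} h = H x" by linarith
  qed
  ultimately show ?thesis using continuous_on_eq by blast
qed

lemma ac_has_deriv:
  fixes h H :: "real \<Rightarrow> real"
  assumes hi: "set_integrable lborel {0..l} h"
    and H: "\<forall>x\<in>{0..l}. H x = H 0 + (LINT y:{0..x}|lborel. h y)"
    and hc: "continuous_on {0..l} h" and x: "x \<in> {0..l}"
  shows "(H has_real_derivative h x) (at x within {0..l})"
proof -
  have d: "((\<lambda>x. H 0 + integral {0..x} h) has_real_derivative h x) (at x within {0..l})"
    using DERIV_add[OF DERIV_const integral_has_real_derivative[OF hc x], of "H 0"] by simp
  have eq: "H 0 + integral {0..y} h = H y" if y: "y \<in> {0..l}" for y
  proof -
    from y have "{0..y} \<subseteq> {0..l}" by auto
    from lint_eq_integral(1)[OF hi this] bspec[OF H y]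
    show "H 0 + integral {0..y} h = H y" by linarith
  qed
  show ?thesis
  proof (rule has_field_derivative_transform_within[OF d zero_less_one x])
    fix y assume "y \<in> {0..l}" "dist y x < 1"
    then show "H 0 + integral {0..y} h = H y" using eq by blast
  qed
qed

lemma si_mult_cont:
  fixes f g :: "real \<Rightarrow> real"
  assumes f: "set_integrable lborel {a..b} f" and g: "continuous_on {a..b} g"
  shows "set_integrable lborel {a..b} (\<lambda>x. f x * g x)"
proof -
  have "bounded (g ` {a..b})"
    by (rule compact_imp_bounded[OF compact_continuous_image[OF g compact_Icc]])
  then obtain C where C0: "\<forall>x\<in>{a..b}. \<bar>g x\<bar> \<le> C"
    unfolding bounded_iff by auto
  have C: "\<bar>g x\<bar> \<le> C" if "x \<in> {a..b}" for x using C0 that by blast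
  have m1: "(\<lambda>x. indicator {a..b} x * f x) \<in> borel_measurable lborel"
    using f unfolding set_integrable_def by (simp add: borel_measurable_integrable)
  have m2: "(\<lambda>x. indicator {a..b} x * g x) \<in> borel_measurable lborel"
    using borel_integrable_atLeastAtMost'[OF g] unfolding set_integrable_def
    by (simp add: borel_measurable_integrable)
  have eq: "(\<lambda>x. indicator {a..b} x *\<^sub>R (f x * g x)) =
      (\<lambda>x. (indicator {a..b} x * f x) * (indicator {a..b} x * g x))"
    by (auto split: split_indicator)
  have M: "set_borel_measurable lborel {a..b} (\<lambda>x. f x * g x)"
    unfolding set_borel_measurable_def eq by (rule borel_measurable_times[OF m1 m2])
  have I: "set_integrable lborel {a..b} (\<lambda>x. C * f x)"
    using f by (rule set_integrable_mult_right)
  have A: "AE x in lborel. x \<in> {a..b} \<longrightarrow> norm (f x * g x) \<le> norm (C * f x)"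
  proof (rule AE_I2, rule impI)
    fix x assume x: "x \<in> {a..b}"
    have "\<bar>f x\<bar> * \<bar>g x\<bar> \<le> \<bar>f x\<bar> * C" using C[OF x] by (simp add: mult_left_mono)
    moreover have "C \<ge> 0" using C[OF x] by linarith
    ultimately show "norm (f x * g x) \<le> norm (C * f x)" by (simp add: abs_mult mult.commute)
  qed
  show ?thesis by (rule set_integrable_bound[OF I M A])
qed


lemma ibp:
  fixes h H g g' :: "real \<Rightarrow> real"
  assumes l: "0 \<le> l" and hi: "set_integrable lborel {0..l} h"
    and H: "\<forall>x\<in>{0..l}. H x = H 0 + (LINT y:{0..x}|lborel. h y)"
    and g: "\<And>x. x \<in> {0..l} \<Longrightarrow> (g has_real_derivative g' x) (at x within {0..l})"
    and g'c: "continuous_on {0..l} g'"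
  shows "(LINT x:{0..l}|lborel. h x * g x) = H l * g l - H 0 * g 0 - (LINT x:{0..l}|lborel. H x * g' x)"
proof -
  have gc: "continuous_on {0..l} g"
    using g by (meson DERIV_continuous continuous_on_eq_continuous_within)
  have Hc: "continuous_on {0..l} H" by (rule ac_cont[OF hi H])
  have gx: "(LINT y:{0..x}|lborel. g' y) = g x - g 0" if x: "x \<in> {0..l}" for x
  proof (rule ftc_lint)
    show "0 \<le> x" using x by simp
    show "(g has_real_derivative g' y) (at y within {0..x})" if "y \<in> {0..x}" for y
      using that x by (intro DERIV_subset[OF g]) auto
    show "continuous_on {0..x} g'" using x by (intro continuous_on_subset[OF g'c]) auto
  qed
  have hI: "h integrable_on {0..l}" using lint_eq_integral(2)[OF hi, of 0 l] by simp
  have Hx: "(LINT y:{x..l}|lborel. h y) = H l - H x" if x: "x \<in> {0..l}" for x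
  proof -
    have "integral {0..x} h + integral {x..l} h = integral {0..l} h"
      using x by (intro Henstock_Kurzweil_Integration.integral_combine[OF _ _ hI]) auto
    moreover have "(LINT y:{0..x}|lborel. h y) = integral {0..x} h"
      using x by (intro lint_eq_integral(1)[OF hi]) auto
    moreover have "(LINT y:{x..l}|lborel. h y) = integral {x..l} h"
      using x by (intro lint_eq_integral(1)[OF hi]) auto
    moreover have "(LINT y:{0..l}|lborel. h y) = integral {0..l} h"
      by (intro lint_eq_integral(1)[OF hi]) auto
    moreover have "H x = H 0 + (LINT y:{0..x}|lborel. h y)" using H x by blast
    moreover have "H l = H 0 + (LINT y:{0..l}|lborel. h y)" by (rule bspec[OF H]) (use l in simp)
    ultimately show ?thesis by linarith
  qed
  define hh where "hh x = indicator {0..l} x * h x" for x :: real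
  define gg where "gg y = indicator {0..l} y * g' y" for y :: real
  have hh_int: "integrable lborel hh" using hi unfolding set_integrable_def hh_def by simp
  have gg_int: "integrable lborel gg"
    using borel_integrable_atLeastAtMost'[OF g'c] unfolding set_integrable_def gg_def by simp
  have hhm[measurable]: "hh \<in> borel_measurable lborel" by (rule borel_measurable_integrable[OF hh_int])
  have ggm[measurable]: "gg \<in> borel_measurable lborel" by (rule borel_measurable_integrable[OF gg_int])
  define F where "F x y = hh x * (gg y * (if y \<le> x then 1 else 0))" for x y :: real
  have Fm: "(\<lambda>(x,y). F x y) \<in> borel_measurable (lborel \<Otimes>\<^sub>M lborel)"
    unfolding F_def by measurable
  have Fi: "F x y = hh x * (gg y * indicator {..x} y)" for x y
    by (simp add: F_def split: split_indicator)
  have ii: "integrable lborel (\<lambda>y. gg y * indicator {..x} y)" for x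
    by (rule integrable_real_mult_indicator) (auto intro: gg_int)
  have iia: "integrable lborel (\<lambda>y. \<bar>gg y\<bar> * indicator {..x} y)" for x
    by (rule integrable_real_mult_indicator) (auto intro: gg_int)
  have m: "(\<lambda>x. \<integral>y. norm (F x y) \<partial>lborel) \<in> borel_measurable lborel"
    unfolding F_def by measurable
  have nF: "(\<integral>y. \<bar>F x y\<bar> \<partial>lborel) = \<bar>hh x\<bar> * (\<integral>y. \<bar>gg y\<bar> * indicator {..x} y \<partial>lborel)" for x
  proof -
    have "(\<lambda>y. \<bar>F x y\<bar>) = (\<lambda>y. \<bar>hh x\<bar> * (\<bar>gg y\<bar> * indicator {..x} y))"
      by (simp add: Fi abs_mult fun_eq_iff)
    then show ?thesis by simp
  qed
  have i1: "integrable lborel (\<lambda>x. \<integral>y. norm (F x y) \<partial>lborel)"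
  proof (rule Bochner_Integration.integrable_bound[OF _ m])
    show "integrable lborel (\<lambda>x. \<bar>hh x\<bar> * (\<integral>y. \<bar>gg y\<bar> \<partial>lborel))"
      using hh_int by simp
    show "AE x in lborel. norm (\<integral>y. norm (F x y) \<partial>lborel) \<le> norm (\<bar>hh x\<bar> * (\<integral>y. \<bar>gg y\<bar> \<partial>lborel))"
    proof (rule AE_I2)
      fix x
      have a: "(\<integral>y. \<bar>gg y\<bar> * indicator {..x} y \<partial>lborel) \<le> (\<integral>y. \<bar>gg y\<bar> \<partial>lborel)"
        by (rule integral_mono[OF iia integrable_abs[OF gg_int]]) (simp split: split_indicator)
      have b: "0 \<le> (\<integral>y. \<bar>gg y\<bar> * indicator {..x} y \<partial>lborel)"
        by (rule integral_nonneg_AE) (simp split: split_indicator)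
      have "\<bar>hh x\<bar> * (\<integral>y. \<bar>gg y\<bar> * indicator {..x} y \<partial>lborel) \<le> \<bar>hh x\<bar> * (\<integral>y. \<bar>gg y\<bar> \<partial>lborel)"
        using a by (rule mult_left_mono) simp
      then show "norm (\<integral>y. norm (F x y) \<partial>lborel) \<le> norm (\<bar>hh x\<bar> * (\<integral>y. \<bar>gg y\<bar> \<partial>lborel))"
        using a b by (simp only: real_norm_def nF) (simp add: abs_mult)
    qed
  qed
  have i2: "AE x in lborel. integrable lborel (\<lambda>y. F x y)"
    by (rule AE_I2) (simp add: Fi ii)
  have Fint: "integrable (lborel \<Otimes>\<^sub>M lborel) (\<lambda>(x,y). F x y)"
    by (rule lborel_pair.Fubini_integrable[OF Fm]) (use i1 i2 in simp_all)
  have fub: "(\<integral>y. (\<integral>x. F x y \<partial>lborel) \<partial>lborel) = (\<integral>x. (\<integral>y. F x y \<partial>lborel) \<partial>lborel)"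
    by (rule lborel_pair.Fubini_integral) (use Fint in simp)
  have inner_y: "(\<integral>y. F x y \<partial>lborel) = indicator {0..l} x * (h x * (g x - g 0))" for x
  proof -
    have "(\<integral>y. F x y \<partial>lborel) = hh x * (\<integral>y. gg y * indicator {..x} y \<partial>lborel)"
      by (simp add: Fi)
    also have "\<dots> = indicator {0..l} x * (h x * (g x - g 0))"
    proof (cases "x \<in> {0..l}")
      case True
      have "(\<lambda>y. gg y * indicator {..x} y) = (\<lambda>y. indicator {0..x} y *\<^sub>R g' y)"
        using True by (auto simp: gg_def fun_eq_iff split: split_indicator)
      then have "(\<integral>y. gg y * indicator {..x} y \<partial>lborel) = (LINT y:{0..x}|lborel. g' y)"
        by (simp add: set_lebesgue_integral_def)
      then show ?thesis using True gx[OF True] by (simp add: hh_def)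
    next
      case False
      then show ?thesis by (simp add: hh_def)
    qed
    finally show ?thesis .
  qed
  have inner_x: "(\<integral>x. F x y \<partial>lborel) = indicator {0..l} y * (g' y * (H l - H y))" for y
  proof -
    have "(\<lambda>x. F x y) = (\<lambda>x. gg y * (hh x * indicator {y..} x))"
      by (auto simp: Fi fun_eq_iff split: split_indicator)
    then have "(\<integral>x. F x y \<partial>lborel) = gg y * (\<integral>x. hh x * indicator {y..} x \<partial>lborel)"
      by simp
    also have "\<dots> = indicator {0..l} y * (g' y * (H l - H y))"
    proof (cases "y \<in> {0..l}")
      case True
      have "(\<lambda>x. hh x * indicator {y..} x) = (\<lambda>x. indicator {y..l} x *\<^sub>R h x)"
        using True by (auto simp: hh_def fun_eq_iff split: split_indicator)
      then have "(\<integral>x. hh x * indicator {y..} x \<partial>lborel) = (LINT x:{y..l}|lborel. h x)"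
        by (simp add: set_lebesgue_integral_def)
      then show ?thesis using True Hx[OF True] by (simp add: gg_def)
    next
      case False
      then show ?thesis by (simp add: gg_def)
    qed
    finally show ?thesis .
  qed
  have E1: "(\<integral>x. (\<integral>y. F x y \<partial>lborel) \<partial>lborel) = (LINT x:{0..l}|lborel. h x * (g x - g 0))"
    by (simp add: inner_y set_lebesgue_integral_def)
  have E2: "(\<integral>y. (\<integral>x. F x y \<partial>lborel) \<partial>lborel) = (LINT y:{0..l}|lborel. g' y * (H l - H y))"
    by (simp add: inner_x set_lebesgue_integral_def)
  have I_hg: "set_integrable lborel {0..l} (\<lambda>x. h x * g x)" by (rule si_mult_cont[OF hi gc])
  have I_g': "set_integrable lborel {0..l} g'" by (rule borel_integrable_atLeastAtMost'[OF g'c])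
  have I_Hg': "set_integrable lborel {0..l} (\<lambda>x. H x * g' x)"
    by (rule borel_integrable_atLeastAtMost') (intro continuous_intros Hc g'c)
  have I_g0h: "set_integrable lborel {0..l} (\<lambda>x. g 0 * h x)" by (rule set_integrable_mult_right[OF hi])
  have I_Hlg': "set_integrable lborel {0..l} (\<lambda>x. H l * g' x)" by (rule set_integrable_mult_right[OF I_g'])
  have "(LINT x:{0..l}|lborel. h x * (g x - g 0)) = (LINT x:{0..l}|lborel. h x * g x - g 0 * h x)"
    by (simp add: algebra_simps)
  also have "\<dots> = (LINT x:{0..l}|lborel. h x * g x) - (LINT x:{0..l}|lborel. g 0 * h x)"
    by (rule set_integral_diff(2)[OF I_hg I_g0h])
  also have "\<dots> = (LINT x:{0..l}|lborel. h x * g x) - g 0 * (H l - H 0)"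
  proof -
    have "H l = H 0 + (LINT y:{0..l}|lborel. h y)" by (rule bspec[OF H]) (use l in simp)
    then show ?thesis by simp
  qed
  finally have L1: "(LINT x:{0..l}|lborel. h x * (g x - g 0)) = (LINT x:{0..l}|lborel. h x * g x) - g 0 * (H l - H 0)" .
  have "(LINT y:{0..l}|lborel. g' y * (H l - H y)) = (LINT y:{0..l}|lborel. H l * g' y - H y * g' y)"
    by (simp add: algebra_simps)
  also have "\<dots> = (LINT y:{0..l}|lborel. H l * g' y) - (LINT y:{0..l}|lborel. H y * g' y)"
    by (rule set_integral_diff(2)[OF I_Hlg' I_Hg'])
  also have "\<dots> = H l * (g l - g 0) - (LINT y:{0..l}|lborel. H y * g' y)"
    using gx[of l] l by simp
  finally have L2: "(LINT y:{0..l}|lborel. g' y * (H l - H y)) = H l * (g l - g 0) - (LINT y:{0..l}|lborel. H y * g' y)" .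
  have "(LINT y:{0..l}|lborel. g' y * (H l - H y)) = (LINT x:{0..l}|lborel. h x * (g x - g 0))"
    using fub E1 E2 by simp
  then show ?thesis using L1 L2 by (simp add: algebra_simps)
qed


lemma lint_nonneg:
  fixes f :: "real \<Rightarrow> real"
  assumes "\<And>x. x \<in> A \<Longrightarrow> 0 \<le> f x"
  shows "0 \<le> (LINT x:A|lborel. f x)"
  unfolding set_lebesgue_integral_def
  by (rule integral_nonneg_AE, rule AE_I2) (use assms in \<open>simp split: split_indicator\<close>)

lemma lint_const:
  assumes "0 \<le> l"
  shows "(LINT x:{0..l}|lborel. (c::real)) = c * l"
proof -
  have "(LINT x:{0..l}|lborel. c) = c * l - c * 0"
    by (rule ftc_lint[OF assms]) (auto intro!: derivative_eq_intros)
  then show ?thesis by simp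
qed

lemma L2on_int:
  assumes f: "L2on l f" and l: "0 \<le> l"
  shows "set_integrable lborel {0..l} f"
proof -
  have I: "set_integrable lborel {0..l} (\<lambda>x. 1 + (f x)\<^sup>2)"
    using f unfolding L2on_def
    by (intro set_integral_add(1)[OF borel_integrable_atLeastAtMost'[OF continuous_on_const]]) auto
  have M: "set_borel_measurable lborel {0..l} f" using f unfolding L2on_def by simp
  have A: "AE x in lborel. x \<in> {0..l} \<longrightarrow> norm (f x) \<le> norm (1 + (f x)\<^sup>2)"
  proof (rule AE_I2, rule impI)
    fix x
    have "\<bar>f x\<bar> \<le> 1 + (f x)\<^sup>2"
    proof (cases "\<bar>f x\<bar> \<le> 1")
      case True then show ?thesis by (smt (verit) zero_le_power2)
    next
      case False
      then have "\<bar>f x\<bar> * 1 \<le> \<bar>f x\<bar> * \<bar>f x\<bar>" by (intro mult_left_mono) auto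
      then show ?thesis by (simp add: power2_eq_square)
    qed
    then show "norm (f x) \<le> norm (1 + (f x)\<^sup>2)" by simp
  qed
  show ?thesis by (rule set_integrable_bound[OF I M A])
qed

lemma L2on_comb:
  assumes f: "L2on l f" and g: "L2on l g" and h: "L2on l h"
  shows "L2on l (\<lambda>x. (f x - g x) / c - h x)"
proof -
  have mf: "(\<lambda>x. indicator {0..l} x * f x) \<in> borel_measurable lborel"
    using f unfolding L2on_def set_borel_measurable_def by simp
  have mg: "(\<lambda>x. indicator {0..l} x * g x) \<in> borel_measurable lborel"
    using g unfolding L2on_def set_borel_measurable_def by simp
  have mh: "(\<lambda>x. indicator {0..l} x * h x) \<in> borel_measurable lborel"
    using h unfolding L2on_def set_borel_measurable_def by simp
  have eq: "(\<lambda>x. indicator {0..l} x *\<^sub>R ((f x - g x) / c - h x)) =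
    (\<lambda>x. ((indicator {0..l} x * f x) - (indicator {0..l} x * g x)) / c - indicator {0..l} x * h x)"
    by (auto simp: fun_eq_iff split: split_indicator)
  have M: "set_borel_measurable lborel {0..l} (\<lambda>x. (f x - g x) / c - h x)"
    unfolding set_borel_measurable_def eq using mf mg mh by measurable
  have M2: "set_borel_measurable lborel {0..l} (\<lambda>x. ((f x - g x) / c - h x)\<^sup>2)"
  proof -
    have eq2: "(\<lambda>x. indicator {0..l} x *\<^sub>R (((f x - g x) / c - h x)\<^sup>2)) =
       (\<lambda>x. (indicator {0..l} x *\<^sub>R ((f x - g x) / c - h x))\<^sup>2)"
      by (auto simp: fun_eq_iff split: split_indicator)
    show ?thesis using M unfolding set_borel_measurable_def eq2 by measurable
  qed
  have I: "set_integrable lborel {0..l} (\<lambda>x. 3 * ((f x)\<^sup>2 / c\<^sup>2) + 3 * ((g x)\<^sup>2 / c\<^sup>2) + 3 * (h x)\<^sup>2)"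
    using f g h unfolding L2on_def by (intro set_integral_add(1) set_integrable_mult_right set_integrable_divide) auto
  have A: "AE x in lborel. x \<in> {0..l} \<longrightarrow> norm (((f x - g x) / c - h x)\<^sup>2) \<le>
      norm (3 * ((f x)\<^sup>2 / c\<^sup>2) + 3 * ((g x)\<^sup>2 / c\<^sup>2) + 3 * (h x)\<^sup>2)"
  proof (rule AE_I2, rule impI)
    fix x
    define a where "a = f x / c"
    define b where "b = g x / c"
    define d where "d = h x"
    have "(a - b - d)\<^sup>2 \<le> 3 * a\<^sup>2 + 3 * b\<^sup>2 + 3 * d\<^sup>2"
    proof -
      have "0 \<le> (a + b)\<^sup>2 + (a + d)\<^sup>2 + (b - d)\<^sup>2" by simp
      then show ?thesis by (simp add: power2_eq_square algebra_simps)
    qed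
    moreover have "(f x - g x) / c - h x = a - b - d" by (simp add: a_def b_def d_def diff_divide_distrib)
    moreover have "a\<^sup>2 = (f x)\<^sup>2 / c\<^sup>2" "b\<^sup>2 = (g x)\<^sup>2 / c\<^sup>2" by (simp_all add: a_def b_def power_divide)
    ultimately show "norm (((f x - g x) / c - h x)\<^sup>2) \<le>
      norm (3 * ((f x)\<^sup>2 / c\<^sup>2) + 3 * ((g x)\<^sup>2 / c\<^sup>2) + 3 * (h x)\<^sup>2)"
      by (simp add: d_def)
  qed
  have "set_integrable lborel {0..l} (\<lambda>x. ((f x - g x) / c - h x)\<^sup>2)"
    by (rule set_integrable_bound[OF I M2 A])
  then show ?thesis unfolding L2on_def using M by simp
qed

lemma L1_bound:
  assumes w: "L2on l w" and l: "0 \<le> l" and d: "\<delta> > 0"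
  shows "(LINT x:{0..l}|lborel. \<bar>w x\<bar>) \<le> \<delta> * l / 2 + (LINT x:{0..l}|lborel. (w x)\<^sup>2) / (2*\<delta>)"
proof -
  have I1: "set_integrable lborel {0..l} (\<lambda>x. \<bar>w x\<bar>)"
    by (rule set_integrable_abs[OF L2on_int[OF w l]])
  have I2: "set_integrable lborel {0..l} (\<lambda>x. (w x)\<^sup>2 / (2*\<delta>))"
    using w unfolding L2on_def by (intro set_integrable_divide) auto
  have I3: "set_integrable lborel {0..l} (\<lambda>x. \<delta> / 2 + (w x)\<^sup>2 / (2*\<delta>))"
    by (rule set_integral_add(1)[OF borel_integrable_atLeastAtMost'[OF continuous_on_const] I2])
  have "(LINT x:{0..l}|lborel. \<bar>w x\<bar>) \<le> (LINT x:{0..l}|lborel. \<delta> / 2 + (w x)\<^sup>2 / (2*\<delta>))"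
  proof (rule set_integral_mono[OF I1 I3])
    fix x
    have "0 \<le> (\<bar>w x\<bar> - \<delta>)\<^sup>2" by simp
    then have "2 * \<delta> * \<bar>w x\<bar> \<le> \<delta>\<^sup>2 + (w x)\<^sup>2"
      by (simp add: power2_eq_square algebra_simps)
    then have "\<bar>w x\<bar> \<le> (\<delta>\<^sup>2 + (w x)\<^sup>2) / (2 * \<delta>)"
      using d by (simp add: field_simps)
    also have "\<dots> = \<delta> / 2 + (w x)\<^sup>2 / (2*\<delta>)"
      using d by (simp add: field_simps power2_eq_square)
    finally show "\<bar>w x\<bar> \<le> \<delta> / 2 + (w x)\<^sup>2 / (2*\<delta>)" .
  qed
  also have "\<dots> = (LINT x:{0..l}|lborel. \<delta> / 2) + (LINT x:{0..l}|lborel. (w x)\<^sup>2 / (2*\<delta>))"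
    by (rule set_integral_add(2)[OF borel_integrable_atLeastAtMost'[OF continuous_on_const] I2])
  also have "\<dots> = \<delta> * l / 2 + (LINT x:{0..l}|lborel. (w x)\<^sup>2) / (2*\<delta>)"
    using l by (simp add: lint_const)
  finally show ?thesis .
qed

lemma L2_to_L1:
  assumes lim: "((\<lambda>s. L2norm l (w s)) \<longlongrightarrow> 0) F" and ev: "eventually (\<lambda>s. L2on l (w s)) F"
    and l: "0 < l"
  shows "((\<lambda>s. LINT x:{0..l}|lborel. \<bar>w s x\<bar>) \<longlongrightarrow> 0) F"
proof -
  define I where "I s = (LINT x:{0..l}|lborel. (w s x)\<^sup>2)" for s
  have Inn: "I s \<ge> 0" for s unfolding I_def by (rule lint_nonneg) simp
  have "((\<lambda>s. (L2norm l (w s))\<^sup>2) \<longlongrightarrow> 0) F" using tendsto_power[OF lim, of 2] by simp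
  moreover have "(L2norm l (w s))\<^sup>2 = I s" for s
    using Inn[of s] by (simp add: L2norm_def I_def)
  ultimately have IF: "(I \<longlongrightarrow> 0) F" by simp
  show ?thesis
  proof (rule tendstoI)
    fix e :: real assume e: "e > 0"
    have "e\<^sup>2 / l > 0" using e l by simp
    then have ev1: "eventually (\<lambda>s. I s < e\<^sup>2 / l) F" using order_tendstoD(2)[OF IF] by blast
    show "eventually (\<lambda>s. dist (LINT x:{0..l}|lborel. \<bar>w s x\<bar>) 0 < e) F"
      using ev1 ev
    proof eventually_elim
      case (elim s)
      define d where "d = e / l"
      have d: "d > 0" using e l by (simp add: d_def)
      have b: "(LINT x:{0..l}|lborel. \<bar>w s x\<bar>) \<le> d * l / 2 + I s / (2*d)"
        unfolding I_def by (rule L1_bound[OF elim(2)]) (use l d in auto)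
      have "d * l / 2 = e / 2" using l by (simp add: d_def)
      moreover have "I s / (2*d) = I s * l / (2 * e)" using l e by (simp add: d_def field_simps)
      moreover have "I s * l < e\<^sup>2" using elim(1) l by (simp add: field_simps)
      then have "I s * l / (2 * e) < e / 2" using e by (simp add: field_simps power2_eq_square)
      ultimately have "(LINT x:{0..l}|lborel. \<bar>w s x\<bar>) < e" using b by linarith
      moreover have "0 \<le> (LINT x:{0..l}|lborel. \<bar>w s x\<bar>)" by (rule lint_nonneg) simp
      ultimately show ?case by simp
    qed
  qed
qed

lemma lint_G_bound:
  fixes G w :: "real \<Rightarrow> real"
  assumes w: "set_integrable lborel {0..l} w" and G: "continuous_on {0..l} G"
    and Gb: "\<And>x. x \<in> {0..l} \<Longrightarrow> \<bar>G x\<bar> \<le> 1"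
  shows "\<bar>LINT x:{0..l}|lborel. G x * w x\<bar> \<le> (LINT x:{0..l}|lborel. \<bar>w x\<bar>)"
proof -
  have I: "set_integrable lborel {0..l} (\<lambda>x. G x * w x)"
    using si_mult_cont[OF w G] by (simp add: mult.commute)
  have Ia: "set_integrable lborel {0..l} (\<lambda>x. \<bar>w x\<bar>)" by (rule set_integrable_abs[OF w])
  have "\<bar>LINT x:{0..l}|lborel. G x * w x\<bar> \<le> (LINT x:{0..l}|lborel. \<bar>G x * w x\<bar>)"
    using set_integral_norm_bound[OF I] by simp
  also have "\<dots> \<le> (LINT x:{0..l}|lborel. \<bar>w x\<bar>)"
  proof (rule set_integral_mono[OF set_integrable_abs[OF I] Ia])
    fix x assume "x \<in> {0..l}"
    then show "\<bar>G x * w x\<bar> \<le> \<bar>w x\<bar>" using Gb[of x] by (simp add: abs_mult mult_left_le_one_le)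
  qed
  finally show ?thesis .
qed


lemma ev_within: "eventually (\<lambda>t. t \<in> S \<and> t \<noteq> s) (at s within S)"
  unfolding eventually_at_filter by (rule always_eventually) auto

lemma C1_facts:
  assumes C1: "C1_L2 T U Ut l" and s: "s \<in> {0..T}"
  shows "((\<lambda>t. L2norm l (\<lambda>x. (U t x - U s x) / (t - s) - Ut s x)) \<longlongrightarrow> 0) (at s within {0..T})"
    and "eventually (\<lambda>t. L2on l (\<lambda>x. (U t x - U s x) / (t - s) - Ut s x)) (at s within {0..T})"
    and "\<And>t. t \<in> {0..T} \<Longrightarrow> L2on l (U t)" "\<And>t. t \<in> {0..T} \<Longrightarrow> L2on l (Ut t)"
proof -
  show "((\<lambda>t. L2norm l (\<lambda>x. (U t x - U s x) / (t - s) - Ut s x)) \<longlongrightarrow> 0) (at s within {0..T})"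
    using C1 s unfolding C1_L2_def by blast
  show U: "\<And>t. t \<in> {0..T} \<Longrightarrow> L2on l (U t)" "\<And>t. t \<in> {0..T} \<Longrightarrow> L2on l (Ut t)"
    using C1 unfolding C1_L2_def by blast+
  show "eventually (\<lambda>t. L2on l (\<lambda>x. (U t x - U s x) / (t - s) - Ut s x)) (at s within {0..T})"
    using ev_within[of "{0..T}" s]
  proof eventually_elim
    case (elim t)
    then show ?case using U s by (intro L2on_comb) auto
  qed
qed

lemma L1_cont:
  assumes C1: "C1_L2 T U Ut l" and s: "s \<in> {0..T}" and l: "0 < l"
  shows "((\<lambda>t. LINT x:{0..l}|lborel. \<bar>U t x - U s x\<bar>) \<longlongrightarrow> 0) (at s within {0..T})"
proof -
  define q where "q t x = (U t x - U s x) / (t - s) - Ut s x" for t x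
  note CF = C1_facts[OF C1 s]
  have Lq: "((\<lambda>t. LINT x:{0..l}|lborel. \<bar>q t x\<bar>) \<longlongrightarrow> 0) (at s within {0..T})"
    unfolding q_def by (rule L2_to_L1[OF CF(1) CF(2) l])
  define c where "c = (LINT x:{0..l}|lborel. \<bar>Ut s x\<bar>)"
  have R: "((\<lambda>t. \<bar>t - s\<bar> * ((LINT x:{0..l}|lborel. \<bar>q t x\<bar>) + c)) \<longlongrightarrow> \<bar>s - s\<bar> * (0 + c)) (at s within {0..T})"
    by (intro tendsto_intros Lq)
  have ev: "eventually (\<lambda>t. (LINT x:{0..l}|lborel. \<bar>U t x - U s x\<bar>) \<le> \<bar>t - s\<bar> * ((LINT x:{0..l}|lborel. \<bar>q t x\<bar>) + c)) (at s within {0..T})"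
    using ev_within[of "{0..T}" s] CF(2)
  proof eventually_elim
    case (elim t)
    have Iq: "set_integrable lborel {0..l} (\<lambda>x. \<bar>q t x\<bar>)"
      using L2on_int[OF elim(2)] l unfolding q_def by (intro set_integrable_abs) auto
    have IU: "set_integrable lborel {0..l} (\<lambda>x. \<bar>Ut s x\<bar>)"
      using L2on_int[OF CF(4)[OF s]] l by (intro set_integrable_abs) auto
    have IUd: "set_integrable lborel {0..l} (\<lambda>x. \<bar>U t x - U s x\<bar>)"
      using L2on_int[OF CF(3)] l elim(1) s by (intro set_integrable_abs set_integral_diff(1)) auto
    have "(LINT x:{0..l}|lborel. \<bar>U t x - U s x\<bar>) \<le> (LINT x:{0..l}|lborel. \<bar>t - s\<bar> * (\<bar>q t x\<bar> + \<bar>Ut s x\<bar>))"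
    proof (rule set_integral_mono[OF IUd])
      show "set_integrable lborel {0..l} (\<lambda>x. \<bar>t - s\<bar> * (\<bar>q t x\<bar> + \<bar>Ut s x\<bar>))"
        by (intro set_integrable_mult_right set_integral_add(1) Iq IU)
      fix x
      have "U t x - U s x = (t - s) * (q t x + Ut s x)"
        using elim(1) by (simp add: q_def field_simps)
      then show "\<bar>U t x - U s x\<bar> \<le> \<bar>t - s\<bar> * (\<bar>q t x\<bar> + \<bar>Ut s x\<bar>)"
        by (simp add: abs_mult mult_left_mono abs_triangle_ineq)
    qed
    also have "\<dots> = \<bar>t - s\<bar> * ((LINT x:{0..l}|lborel. \<bar>q t x\<bar>) + c)"
      unfolding c_def by (simp add: set_integral_add(2)[OF Iq IU])
    finally show ?case .
  qed
  have ev0: "eventually (\<lambda>t. 0 \<le> (LINT x:{0..l}|lborel. \<bar>U t x - U s x\<bar>)) (at s within {0..T})"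
    by (rule always_eventually) (auto intro: lint_nonneg)
  show ?thesis
    by (rule tendsto_sandwich[OF ev0 ev tendsto_const]) (use R in simp)
qed

lemma dini_edge:
  fixes G :: "real \<Rightarrow> real"
  assumes C1: "C1_L2 T U Ut l" and s: "s \<in> {0..T}" and l: "0 < l"
    and G: "continuous_on {0..l} G" and Gb: "\<And>x. x \<in> {0..l} \<Longrightarrow> \<bar>G x\<bar> \<le> 1"
  shows "((\<lambda>t. LINT x:{0..l}|lborel. G x * ((U s x - U t x) / (s - t))) \<longlongrightarrow>
           (LINT x:{0..l}|lborel. G x * Ut s x)) (at s within {0..T})"
proof -
  define q where "q t x = (U t x - U s x) / (t - s) - Ut s x" for t x
  note CF = C1_facts[OF C1 s]
  have Lq: "((\<lambda>t. LINT x:{0..l}|lborel. \<bar>q t x\<bar>) \<longlongrightarrow> 0) (at s within {0..T})"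
    unfolding q_def by (rule L2_to_L1[OF CF(1) CF(2) l])
  define c where "c = (LINT x:{0..l}|lborel. G x * Ut s x)"
  define D where "D t = (LINT x:{0..l}|lborel. G x * ((U s x - U t x) / (s - t))) - c" for t
  have ev: "eventually (\<lambda>t. \<bar>D t\<bar> \<le> (LINT x:{0..l}|lborel. \<bar>q t x\<bar>)) (at s within {0..T})"
    using CF(2)
  proof eventually_elim
    case (elim t)
    have Iq: "set_integrable lborel {0..l} (q t)"
      using L2on_int[OF elim] l unfolding q_def by auto
    have IU: "set_integrable lborel {0..l} (Ut s)"
      using L2on_int[OF CF(4)[OF s]] l by auto
    have sw: "(U s x - U t x) / (s - t) = (U t x - U s x) / (t - s)" for x
      by (metis minus_diff_eq minus_divide_divide)
    have eq: "(\<lambda>x. G x * ((U s x - U t x) / (s - t))) = (\<lambda>x. G x * q t x + G x * Ut s x)"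
      unfolding sw q_def by (simp add: fun_eq_iff algebra_simps)
    have "D t = (LINT x:{0..l}|lborel. G x * q t x)"
      unfolding D_def c_def eq
      using si_mult_cont[OF Iq G] si_mult_cont[OF IU G]
      by (simp add: set_integral_add(2) mult.commute)
    then show ?case using lint_G_bound[OF Iq G Gb] by simp
  qed
  have ev0: "eventually (\<lambda>t. 0 \<le> \<bar>D t\<bar>) (at s within {0..T})" by simp
  have "((\<lambda>t. \<bar>D t\<bar>) \<longlongrightarrow> 0) (at s within {0..T})"
    by (rule tendsto_sandwich[OF ev0 ev tendsto_const Lq])
  then have "(D \<longlongrightarrow> 0) (at s within {0..T})"
    by (rule tendsto_rabs_zero_cancel)
  then have "((\<lambda>t. D t + c) \<longlongrightarrow> 0 + c) (at s within {0..T})"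
    by (intro tendsto_intros)
  then show ?thesis unfolding D_def c_def by simp
qed


lemma H2_facts:
  assumes H2: "H2_rep l f fx fxx"
  shows "set_integrable lborel {0..l} fx" "\<forall>x\<in>{0..l}. f x = f 0 + (LINT y:{0..x}|lborel. fx y)"
    "set_integrable lborel {0..l} fxx" "\<forall>x\<in>{0..l}. fx x = fx 0 + (LINT y:{0..x}|lborel. fxx y)"
  using H2 unfolding H2_rep_def ac_deriv_def by blast+

lemma H2_cont:
  assumes H2: "H2_rep l f fx fxx"
  shows "continuous_on {0..l} f" "continuous_on {0..l} fx"
    "\<And>x. x \<in> {0..l} \<Longrightarrow> (f has_real_derivative fx x) (at x within {0..l})"
proof -
  note F = H2_facts[OF H2]
  show fxc: "continuous_on {0..l} fx" by (rule ac_cont[OF F(3) F(4)])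
  show "continuous_on {0..l} f" by (rule ac_cont[OF F(1) F(2)])
  show "\<And>x. x \<in> {0..l} \<Longrightarrow> (f has_real_derivative fx x) (at x within {0..l})"
    by (rule ac_has_deriv[OF F(1) F(2) fxc])
qed

lemma edge_ineq:
  fixes f fx fxx w :: "real \<Rightarrow> real"
  assumes l: "0 < l" and eps: "0 \<le> eps"
    and H2: "H2_rep l f fx fxx" and w: "L2on l w"
    and pde: "AE x in lborel. x \<in> {0<..<l} \<longrightarrow> a * w x + b * fx x - eps * fxx x \<ge> 0"
  shows "a * (LINT x:{0..l}|lborel. dPhi (f x) * w x) \<le>
     eps * (fx l * dPhi (f l) - fx 0 * dPhi (f 0)) - b * (Phi (f l) - Phi (f 0))"
proof -
  note F = H2_facts[OF H2]
  note C = H2_cont[OF H2]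
  have gc: "continuous_on {0..l} (\<lambda>x. dPhi (f x))"
    by (rule continuous_on_compose2[OF _ C(1), of UNIV]) (auto simp: continuous_at_imp_continuous_on isCont_dPhi)
  have g'c: "continuous_on {0..l} (\<lambda>x. ddPhi (f x) * fx x)"
    by (intro continuous_intros continuous_on_compose2[OF cont_ddPhi C(1), of UNIV] C(2)) auto
  have gd: "((\<lambda>x. dPhi (f x)) has_real_derivative ddPhi (f x) * fx x) (at x within {0..l})"
    if "x \<in> {0..l}" for x
    by (rule DERIV_chain2[OF dPhi_deriv C(3)[OF that]])
  have Pd: "((\<lambda>x. Phi (f x)) has_real_derivative dPhi (f x) * fx x) (at x within {0..l})"
    if "x \<in> {0..l}" for x
    by (rule DERIV_chain2[OF Phi_deriv C(3)[OF that]])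
  have IBP: "(LINT x:{0..l}|lborel. fxx x * dPhi (f x)) =
      fx l * dPhi (f l) - fx 0 * dPhi (f 0) - (LINT x:{0..l}|lborel. fx x * (ddPhi (f x) * fx x))"
    by (rule ibp[OF _ F(3) F(4) gd g'c]) (use l in auto)
  have nn: "0 \<le> (LINT x:{0..l}|lborel. fx x * (ddPhi (f x) * fx x))"
  proof (rule lint_nonneg)
    fix x
    have "0 \<le> fx x * fx x" by simp
    then have "0 \<le> ddPhi (f x) * (fx x * fx x)" by (rule mult_nonneg_nonneg[OF ddPhi_nonneg])
    then show "0 \<le> fx x * (ddPhi (f x) * fx x)" by (simp add: algebra_simps)
  qed
  have FTC: "(LINT x:{0..l}|lborel. dPhi (f x) * fx x) = Phi (f l) - Phi (f 0)"
    by (rule ftc_lint[OF _ Pd]) (use l gc C(2) in \<open>auto intro: continuous_intros\<close>)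
  have wi: "set_integrable lborel {0..l} w" by (rule L2on_int[OF w]) (use l in auto)
  have I1: "set_integrable lborel {0..l} (\<lambda>x. a * (dPhi (f x) * w x))"
    using si_mult_cont[OF wi gc] by (intro set_integrable_mult_right) (simp add: mult.commute)
  have I2a: "set_integrable lborel {0..l} (\<lambda>x. fxx x * dPhi (f x))" by (rule si_mult_cont[OF F(3) gc])
  have I2b: "set_integrable lborel {0..l} (\<lambda>x. dPhi (f x) * fx x)"
    using si_mult_cont[OF F(1) gc] by (simp add: mult.commute)
  have I2: "set_integrable lborel {0..l} (\<lambda>x. eps * (fxx x * dPhi (f x)) - b * (dPhi (f x) * fx x))"
    by (intro set_integral_diff(1) set_integrable_mult_right I2a I2b)
  have AE: "AE x \<in> {0..l} in lborel. a * (dPhi (f x) * w x) \<le> eps * (fxx x * dPhi (f x)) - b * (dPhi (f x) * fx x)"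
    using pde AE_lborel_singleton[of 0] AE_lborel_singleton[of l]
  proof eventually_elim
    case (elim x)
    show ?case
    proof
      assume x: "x \<in> {0..l}"
      then have "x \<in> {0<..<l}" using elim(2,3) by auto
      then have "a * w x \<ge> eps * fxx x - b * fx x" using elim(1) by simp
      then have "dPhi (f x) * (a * w x) \<le> dPhi (f x) * (eps * fxx x - b * fx x)"
        using dPhi_nonpos[of "f x"] by (rule mult_left_mono_neg)
      then show "a * (dPhi (f x) * w x) \<le> eps * (fxx x * dPhi (f x)) - b * (dPhi (f x) * fx x)"
        by (simp add: algebra_simps)
    qed
  qed
  have "a * (LINT x:{0..l}|lborel. dPhi (f x) * w x) = (LINT x:{0..l}|lborel. a * (dPhi (f x) * w x))"
    by simp
  also have "\<dots> \<le> (LINT x:{0..l}|lborel. eps * (fxx x * dPhi (f x)) - b * (dPhi (f x) * fx x))"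
    by (rule set_integral_mono_AE[OF I1 I2 AE])
  also have "\<dots> = eps * (LINT x:{0..l}|lborel. fxx x * dPhi (f x)) - b * (LINT x:{0..l}|lborel. dPhi (f x) * fx x)"
    using I2a I2b by (simp add: set_integral_diff(2))
  also have "\<dots> \<le> eps * (fx l * dPhi (f l) - fx 0 * dPhi (f 0)) - b * (Phi (f l) - Phi (f 0))"
    unfolding IBP FTC using nn eps by (simp add: algebra_simps mult_left_mono)
  finally show ?thesis .
qed


lemma nE_fst: "fst e \<noteq> snd e \<Longrightarrow> nE e (fst e) = -1" and nE_snd: "fst e \<noteq> snd e \<Longrightarrow> nE e (snd e) = 1"
  by (auto simp: nE_def)

lemma nE_other: "v \<noteq> fst e \<Longrightarrow> v \<noteq> snd e \<Longrightarrow> nE e v = 0"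
  by (auto simp: nE_def)

lemma vertex_sum:
  fixes K :: "('v \<times> 'v) \<Rightarrow> 'v \<Rightarrow> real"
  assumes finV: "finite V" and EV: "E \<subseteq> V \<times> V" and ne: "\<forall>e\<in>E. fst e \<noteq> snd e"
  shows "(\<Sum>e\<in>E. K e (snd e) - K e (fst e)) = (\<Sum>v\<in>V. \<Sum>e\<in>edges_at E v. nE e v * K e v)"
proof -
  have finE: "finite E" using finite_subset[OF EV] finV by auto
  have per_e: "K e (snd e) - K e (fst e) = (\<Sum>v\<in>V. nE e v * K e v)" if e: "e \<in> E" for e
  proof -
    have fs: "fst e \<noteq> snd e" using ne e by blast
    have sub: "{fst e, snd e} \<subseteq> V" using EV e by (cases e) auto
    have "(\<Sum>v\<in>V. nE e v * K e v) = (\<Sum>v\<in>{fst e, snd e}. nE e v * K e v)"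
      by (rule sum.mono_neutral_right[OF finV sub]) (auto simp: nE_other)
    also have "\<dots> = K e (snd e) - K e (fst e)"
      using fs by (simp add: nE_fst nE_snd)
    finally show ?thesis by simp
  qed
  have "(\<Sum>e\<in>E. K e (snd e) - K e (fst e)) = (\<Sum>e\<in>E. \<Sum>v\<in>V. nE e v * K e v)"
    by (rule sum.cong) (auto simp: per_e)
  also have "\<dots> = (\<Sum>v\<in>V. \<Sum>e\<in>E. nE e v * K e v)"
    by (rule sum.swap)
  also have "\<dots> = (\<Sum>v\<in>V. \<Sum>e\<in>edges_at E v. nE e v * K e v)"
  proof (rule sum.cong[OF refl])
    fix v
    show "(\<Sum>e\<in>E. nE e v * K e v) = (\<Sum>e\<in>edges_at E v. nE e v * K e v)"
      by (rule sum.mono_neutral_right[OF finE]) (auto simp: edges_at_def)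
  qed
  finally show ?thesis .
qed

lemma bdry_sum_zero:
  fixes V :: "'v set" and E :: "('v \<times> 'v) set"
    and len b eps :: "('v \<times> 'v) \<Rightarrow> real"
    and U Ux :: "('v \<times> 'v) \<Rightarrow> real \<Rightarrow> real"
  assumes net: "network V E"
    and balance: "\<forall>v\<in>inner_vertices V E. (\<Sum>e\<in>edges_at E v. b e * nE e v) = 0"
    and cont: "\<forall>v\<in>V. \<forall>e1\<in>edges_at E v. \<forall>e2\<in>edges_at E v.
                   at_vertex e1 (len e1) (U e1) v = at_vertex e2 (len e2) (U e2) v"
    and kirchhoff: "\<forall>v\<in>inner_vertices V E.
                 (\<Sum>e\<in>edges_at E v. eps e * at_vertex e (len e) (Ux e) v * nE e v) = 0"
    and bdry: "\<forall>v\<in>bdry_vertices V E. \<forall>e\<in>edges_at E v. at_vertex e (len e) (U e) v \<ge> 0"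
  shows "(\<Sum>e\<in>E. eps e * (Ux e (len e) * dPhi (U e (len e)) - Ux e 0 * dPhi (U e 0))
                 - b e * (Phi (U e (len e)) - Phi (U e 0))) = 0"
proof -
  have finV: "finite V" and EV: "E \<subseteq> V \<times> V" and ne: "\<forall>e\<in>E. fst e \<noteq> snd e"
    using net unfolding network_def by auto
  define K where "K e v = eps e * at_vertex e (len e) (Ux e) v * dPhi (at_vertex e (len e) (U e) v)
     - b e * Phi (at_vertex e (len e) (U e) v)" for e v
  have eqe: "eps e * (Ux e (len e) * dPhi (U e (len e)) - Ux e 0 * dPhi (U e 0))
                 - b e * (Phi (U e (len e)) - Phi (U e 0)) = K e (snd e) - K e (fst e)"
    if e: "e \<in> E" for e
  proof -
    have "fst e \<noteq> snd e" using ne e by blast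
    then show ?thesis by (simp add: K_def at_vertex_def algebra_simps)
  qed
  have "(\<Sum>e\<in>E. eps e * (Ux e (len e) * dPhi (U e (len e)) - Ux e 0 * dPhi (U e 0))
                 - b e * (Phi (U e (len e)) - Phi (U e 0))) = (\<Sum>e\<in>E. K e (snd e) - K e (fst e))"
    by (rule sum.cong) (auto simp: eqe)
  also have "\<dots> = (\<Sum>v\<in>V. \<Sum>e\<in>edges_at E v. nE e v * K e v)"
    by (rule vertex_sum[OF finV EV ne])
  also have "\<dots> = (\<Sum>v\<in>V. 0)"
  proof (rule sum.cong[OF refl])
    fix v assume v: "v \<in> V"
    show "(\<Sum>e\<in>edges_at E v. nE e v * K e v) = 0"
    proof (cases "v \<in> inner_vertices V E")
      case True
      then have "card (edges_at E v) \<ge> 2" unfolding inner_vertices_def by auto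
      then have "edges_at E v \<noteq> {}" by auto
      then obtain e0 where e0: "e0 \<in> edges_at E v" by blast
      define Uv where "Uv = at_vertex e0 (len e0) (U e0) v"
      have Ue: "at_vertex e (len e) (U e) v = Uv" if "e \<in> edges_at E v" for e
        using cont v that e0 unfolding Uv_def by blast
      have "(\<Sum>e\<in>edges_at E v. nE e v * K e v) =
        (\<Sum>e\<in>edges_at E v. dPhi Uv * (eps e * at_vertex e (len e) (Ux e) v * nE e v) - Phi Uv * (b e * nE e v))"
        by (rule sum.cong[OF refl]) (simp add: K_def Ue algebra_simps)
      also have "\<dots> = dPhi Uv * (\<Sum>e\<in>edges_at E v. eps e * at_vertex e (len e) (Ux e) v * nE e v)
          - Phi Uv * (\<Sum>e\<in>edges_at E v. b e * nE e v)"
        by (simp add: sum_subtractf sum_distrib_left)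
      also have "\<dots> = 0" using kirchhoff balance True by simp
      finally show ?thesis .
    next
      case False
      then have vb: "v \<in> bdry_vertices V E" using v unfolding bdry_vertices_def by blast
      show ?thesis
      proof (rule sum.neutral, rule ballI)
        fix e assume e: "e \<in> edges_at E v"
        have "at_vertex e (len e) (U e) v \<ge> 0" using bdry vb e by blast
        then show "nE e v * K e v = 0" by (simp add: K_def Phi_zero dPhi_zero)
      qed
    qed
  qed
  finally show ?thesis by simp
qed


lemma mono_eps:
  fixes E :: "real \<Rightarrow> real"
  assumes T: "T > 0" and E0: "E 0 \<le> 0" and Ec: "continuous_on {0..T} E" and e: "\<epsilon> > 0"
    and dini: "\<And>s \<epsilon>. s \<in> {0<..<T} \<Longrightarrow> \<epsilon> > 0 \<Longrightarrow>
        \<exists>\<delta>>0. \<forall>t\<in>{0..T}. t \<noteq> s \<and> dist t s < \<delta> \<longrightarrow> t < s \<longrightarrow> E s \<le> E t + \<epsilon> * (s - t)"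
  shows "\<forall>t\<in>{0..<T}. E t < \<epsilon> * (1 + t)"
proof (rule ccontr)
  define B where "B = {s \<in> {0..<T}. E s \<ge> \<epsilon> * (1 + s)}"
  assume "\<not> (\<forall>t\<in>{0..<T}. E t < \<epsilon> * (1 + t))"
  then have Bne: "B \<noteq> {}" unfolding B_def by force
  have Bbd: "bdd_below B" unfolding B_def by (rule bdd_belowI[of _ 0]) auto
  define c where "c = Inf B"
  have cle: "c \<le> b" if "b \<in> B" for b unfolding c_def by (rule cInf_lower[OF that Bbd])
  have cge: "c \<ge> 0" unfolding c_def by (rule cInf_greatest[OF Bne]) (auto simp: B_def)
  obtain b0 where b0: "b0 \<in> B" using Bne by blast
  have cT: "c < T" using cle[OF b0] b0 unfolding B_def by auto
  have notB: "t \<notin> B" if "t < c" for t using cle that by force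
  have Ec_ge: "E c \<ge> \<epsilon> * (1 + c)"
  proof (rule ccontr)
    assume "\<not> E c \<ge> \<epsilon> * (1 + c)"
    then have eta: "\<epsilon> * (1 + c) - E c > 0" by simp
    have "c \<in> {0..T}" using cge cT by auto
    then obtain d where d: "d > 0" and dd: "\<forall>t\<in>{0..T}. dist t c < d \<longrightarrow> dist (E t) (E c) < \<epsilon> * (1 + c) - E c"
      using Ec eta unfolding continuous_on_iff by blast
    have "c + d \<le> b" if b: "b \<in> B" for b
    proof (rule ccontr)
      assume "\<not> c + d \<le> b"
      moreover have "c \<le> b" by (rule cle[OF b])
      moreover have bT: "b \<in> {0..T}" using b unfolding B_def by auto
      ultimately have "dist (E b) (E c) < \<epsilon> * (1 + c) - E c" using dd by (auto simp: dist_real_def)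
      then have "E b < \<epsilon> * (1 + c)" by (simp add: dist_real_def)
      also have "\<dots> \<le> \<epsilon> * (1 + b)" using \<open>c \<le> b\<close> e by simp
      finally show False using b unfolding B_def by simp
    qed
    then have "c + d \<le> c" unfolding c_def by (intro cInf_greatest[OF Bne]) auto
    then show False using d by simp
  qed
  have c0: "c \<noteq> 0" using Ec_ge E0 e by auto
  then have cs: "c \<in> {0<..<T}" using cge cT by auto
  have e2: "\<epsilon> / 2 > 0" using e by simp
  obtain d where d: "d > 0" and dd: "\<forall>t\<in>{0..T}. t \<noteq> c \<and> dist t c < d \<longrightarrow> t < c \<longrightarrow> E c \<le> E t + \<epsilon> / 2 * (c - t)"
    using dini[OF cs e2] by blast
  define t where "t = max (c - d / 2) (c / 2)"
  have t1: "t < c" using d cs by (auto simp: t_def)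
  have t0: "0 \<le> t" using cs by (auto simp: t_def)
  have tT: "t \<in> {0..T}" using t0 t1 cT by auto
  have tdist: "dist t c < d" using t1 d by (auto simp: t_def dist_real_def)
  have Ect: "E c \<le> E t + \<epsilon> / 2 * (c - t)" using dd tT t1 tdist by auto
  have "t \<notin> B" by (rule notB[OF t1])
  then have "E t < \<epsilon> * (1 + t)" using t0 t1 cT unfolding B_def by auto
  then have "E c < \<epsilon> * (1 + t) + \<epsilon> / 2 * (c - t)" using Ect by linarith
  also have "\<dots> \<le> \<epsilon> * (1 + c)"
  proof -
    have "\<epsilon> / 2 * (c - t) \<le> \<epsilon> * (c - t)" using t1 e by simp
    moreover have "\<epsilon> * (1 + t) + \<epsilon> * (c - t) = \<epsilon> * (1 + c)" by (simp add: algebra_simps)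
    ultimately show ?thesis by linarith
  qed
  finally show False using Ec_ge by simp
qed

lemma mono_arg:
  fixes E :: "real \<Rightarrow> real"
  assumes T: "T > 0" and E0: "E 0 \<le> 0" and Ec: "continuous_on {0..T} E"
    and dini: "\<And>s \<epsilon>. s \<in> {0<..<T} \<Longrightarrow> \<epsilon> > 0 \<Longrightarrow>
        \<exists>\<delta>>0. \<forall>t\<in>{0..T}. t \<noteq> s \<and> dist t s < \<delta> \<longrightarrow> t < s \<longrightarrow> E s \<le> E t + \<epsilon> * (s - t)"
  shows "\<forall>t\<in>{0..T}. E t \<le> 0"
proof
  fix t assume t: "t \<in> {0..T}"
  have "E t \<le> \<epsilon> * (1 + T)" if e: "\<epsilon> > 0" for \<epsilon>
  proof -
    have less: "\<forall>t\<in>{0..<T}. E t < \<epsilon> * (1 + t)" by (rule mono_eps[OF T E0 Ec e dini])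
    show ?thesis
    proof (cases "t < T")
      case True
      then have "E t < \<epsilon> * (1 + t)" using less t by auto
      also have "\<dots> \<le> \<epsilon> * (1 + T)" using True e by simp
      finally show ?thesis by simp
    next
      case False
      then have tT: "t = T" using t by auto
      have "(E \<longlongrightarrow> E T) (at T within {0..T})"
        using Ec T unfolding continuous_on_def by auto
      then have lim: "(E \<longlongrightarrow> E T) (at T within {0..<T})"
        by (rule tendsto_within_subset) auto
      have nt: "at T within {0..<T} \<noteq> bot"
        using T by (simp add: at_within_eq_bot_iff closure_atLeastLessThan)
      have "eventually (\<lambda>s. E s \<le> \<epsilon> * (1 + T)) (at T within {0..<T})"
        unfolding eventually_at_filter
      proof (rule always_eventually, intro allI impI)
        fix s assume "s \<noteq> T" "s \<in> {0..<T}"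
        then have "E s < \<epsilon> * (1 + s)" using less by auto
        also have "\<dots> \<le> \<epsilon> * (1 + T)" using \<open>s \<in> {0..<T}\<close> e by simp
        finally show "E s \<le> \<epsilon> * (1 + T)" by simp
      qed
      then have "E T \<le> \<epsilon> * (1 + T)" by (rule tendsto_upperbound[OF lim _ nt])
      then show ?thesis using tT by simp
    qed
  qed
  then show "E t \<le> 0"
  proof -
    have "E t / (1 + T) \<le> 0"
    proof (rule field_le_epsilon)
      fix e :: real assume "e > 0"
      then have "E t \<le> e * (1 + T)" using \<open>\<And>\<epsilon>. \<epsilon> > 0 \<Longrightarrow> E t \<le> \<epsilon> * (1 + T)\<close> by blast
      then show "E t / (1 + T) \<le> 0 + e" using T by (simp add: field_simps)
    qed
    then show ?thesis using T by (simp add: divide_le_0_iff)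
  qed
qed


lemma Phi_lip: "\<bar>Phi y - Phi x\<bar> \<le> \<bar>y - x\<bar>"
proof -
  have "Phi y - Phi x \<le> dPhi y * (y - x)" by (rule Phi_convex)
  also have "\<dots> \<le> \<bar>dPhi y\<bar> * \<bar>y - x\<bar>" by (metis abs_ge_self abs_mult)
  also have "\<dots> \<le> \<bar>y - x\<bar>" using abs_dPhi[of y] by (simp add: mult_left_le_one_le)
  finally have 1: "Phi y - Phi x \<le> \<bar>y - x\<bar>" .
  have "Phi x - Phi y \<le> dPhi x * (x - y)" by (rule Phi_convex)
  also have "\<dots> \<le> \<bar>dPhi x\<bar> * \<bar>x - y\<bar>" by (metis abs_ge_self abs_mult)
  also have "\<dots> \<le> \<bar>x - y\<bar>" using abs_dPhi[of x] by (simp add: mult_left_le_one_le)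
  finally have 2: "Phi x - Phi y \<le> \<bar>y - x\<bar>" by simp
  show ?thesis using 1 2 by simp
qed

lemma cont_Phi_comp: assumes "continuous_on S f" shows "continuous_on S (\<lambda>x. Phi (f x))"
  by (rule continuous_on_compose2[of UNIV Phi S f]) (use assms in \<open>auto simp: continuous_at_imp_continuous_on isCont_Phi\<close>)

lemma cont_dPhi_comp: assumes "continuous_on S f" shows "continuous_on S (\<lambda>x. dPhi (f x))"
  by (rule continuous_on_compose2[of UNIV dPhi S f]) (use assms in \<open>auto simp: continuous_at_imp_continuous_on isCont_dPhi\<close>)

lemma lint_Phi_lip:
  fixes f g :: "real \<Rightarrow> real"
  assumes f: "continuous_on {0..l} f" and g: "continuous_on {0..l} g"
  shows "\<bar>(LINT x:{0..l}|lborel. Phi (f x)) - (LINT x:{0..l}|lborel. Phi (g x))\<bar>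
      \<le> (LINT x:{0..l}|lborel. \<bar>f x - g x\<bar>)"
proof -
  have If: "set_integrable lborel {0..l} (\<lambda>x. Phi (f x))"
    by (rule borel_integrable_atLeastAtMost'[OF cont_Phi_comp[OF f]])
  have Ig: "set_integrable lborel {0..l} (\<lambda>x. Phi (g x))"
    by (rule borel_integrable_atLeastAtMost'[OF cont_Phi_comp[OF g]])
  have Id: "set_integrable lborel {0..l} (\<lambda>x. \<bar>f x - g x\<bar>)"
    by (rule borel_integrable_atLeastAtMost') (intro continuous_intros f g)
  have "(LINT x:{0..l}|lborel. Phi (f x)) - (LINT x:{0..l}|lborel. Phi (g x)) =
        (LINT x:{0..l}|lborel. Phi (f x) - Phi (g x))"
    by (rule set_integral_diff(2)[OF If Ig, symmetric])
  also have "\<bar>\<dots>\<bar> \<le> (LINT x:{0..l}|lborel. norm (Phi (f x) - Phi (g x)))"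
    using set_integral_norm_bound[OF set_integral_diff(1)[OF If Ig]] by simp
  also have "\<dots> \<le> (LINT x:{0..l}|lborel. \<bar>f x - g x\<bar>)"
    by (rule set_integral_mono[OF _ Id]) (auto intro: set_integrable_abs set_integral_diff(1)[OF If Ig] Phi_lip)
  finally show ?thesis .
qed

lemma lint_Phi_conv:
  fixes f g :: "real \<Rightarrow> real"
  assumes f: "continuous_on {0..l} f" and g: "continuous_on {0..l} g" and st: "s \<noteq> t"
  shows "(LINT x:{0..l}|lborel. Phi (f x)) - (LINT x:{0..l}|lborel. Phi (g x))
      \<le> (s - t) * (LINT x:{0..l}|lborel. dPhi (f x) * ((f x - g x) / (s - t)))"
proof -
  have If: "set_integrable lborel {0..l} (\<lambda>x. Phi (f x))"
    by (rule borel_integrable_atLeastAtMost'[OF cont_Phi_comp[OF f]])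
  have Ig: "set_integrable lborel {0..l} (\<lambda>x. Phi (g x))"
    by (rule borel_integrable_atLeastAtMost'[OF cont_Phi_comp[OF g]])
  have Id: "set_integrable lborel {0..l} (\<lambda>x. dPhi (f x) * (f x - g x))"
    by (rule borel_integrable_atLeastAtMost') (intro continuous_intros cont_dPhi_comp f g)
  have "(LINT x:{0..l}|lborel. Phi (f x)) - (LINT x:{0..l}|lborel. Phi (g x)) =
        (LINT x:{0..l}|lborel. Phi (f x) - Phi (g x))"
    by (rule set_integral_diff(2)[OF If Ig, symmetric])
  also have "\<dots> \<le> (LINT x:{0..l}|lborel. dPhi (f x) * (f x - g x))"
    by (rule set_integral_mono[OF set_integral_diff(1)[OF If Ig] Id]) (rule Phi_convex)
  also have "\<dots> = (LINT x:{0..l}|lborel. (s - t) * (dPhi (f x) * ((f x - g x) / (s - t))))"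
  proof -
    have eqf: "(\<lambda>x. dPhi (f x) * (f x - g x)) = (\<lambda>x. (s - t) * (dPhi (f x) * ((f x - g x) / (s - t))))"
      using st by (simp add: fun_eq_iff field_simps)
    show ?thesis by (subst eqf) (rule refl)
  qed
  also have "\<dots> = (s - t) * (LINT x:{0..l}|lborel. dPhi (f x) * ((f x - g x) / (s - t)))"
    by simp
  finally show ?thesis .
qed

lemma lint_Phi_init:
  fixes f :: "real \<Rightarrow> real"
  assumes f: "continuous_on {0..l} f" and nn: "\<forall>x\<in>{0<..<l}. f x \<ge> 0"
  shows "(LINT x:{0..l}|lborel. Phi (f x)) \<le> 0"
proof -
  have If: "set_integrable lborel {0..l} (\<lambda>x. Phi (f x))"
    by (rule borel_integrable_atLeastAtMost'[OF cont_Phi_comp[OF f]])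
  have "(LINT x:{0..l}|lborel. Phi (f x)) \<le> (LINT x:{0..l}|lborel. 0)"
  proof (rule set_integral_mono_AE[OF If])
    show "set_integrable lborel {0..l} (\<lambda>x. 0::real)" by (simp add: set_integrable_def)
    show "AE x\<in>{0..l} in lborel. Phi (f x) \<le> 0"
      using AE_lborel_singleton[of 0] AE_lborel_singleton[of l]
    proof eventually_elim
      case (elim x)
      show ?case
      proof
        assume "x \<in> {0..l}"
        then have "x \<in> {0<..<l}" using elim by auto
        then show "Phi (f x) \<le> 0" using nn Phi_zero by simp
      qed
    qed
  qed
  then show ?thesis by simp
qed

lemma lint_Phi_zero:
  fixes f :: "real \<Rightarrow> real"
  assumes f: "continuous_on {0..l} f" and l: "0 < l" and z: "(LINT x:{0..l}|lborel. Phi (f x)) = 0"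
    and x: "x \<in> {0..l}"
  shows "f x \<ge> 0"
proof -
  have c: "continuous_on {0..l} (\<lambda>x. Phi (f x))" by (rule cont_Phi_comp[OF f])
  have If: "set_integrable lborel {0..l} (\<lambda>x. Phi (f x))"
    by (rule borel_integrable_atLeastAtMost'[OF c])
  have "integral {0..l} (\<lambda>x. Phi (f x)) = 0" "(\<lambda>x. Phi (f x)) integrable_on {0..l}"
    using set_borel_integral_eq_integral[OF If] z by auto
  then have hi: "((\<lambda>x. Phi (f x)) has_integral 0) (cbox 0 l)"
    using has_integral_integral by (metis cbox_interval)
  have "Phi (f x) = 0"
    by (rule has_integral_0_cbox_imp_0[OF _ _ hi]) (use c x l Phi_nonneg in auto)
  then show ?thesis by (rule Phi_eq0)
qed


theorem lemma3p1:
  fixes V :: "'v set" and E :: "('v \<times> 'v) set"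
    and len a b eps :: "('v \<times> 'v) \<Rightarrow> real" and T :: real
    and u ux uxx ut :: "('v \<times> 'v) \<Rightarrow> real \<Rightarrow> real \<Rightarrow> real"
  assumes net: "network V E"
    and params: "\<forall>e\<in>E. len e > 0 \<and> a e > 0 \<and> b e > 0 \<and> eps e > 0 \<and> eps e \<le> 1"
    and balance: "\<forall>v\<in>inner_vertices V E. (\<Sum>e\<in>edges_at E v. b e * nE e v) = 0"
    and Tpos: "T > 0"
    and H2: "\<forall>e\<in>E. \<forall>t\<in>{0..T}. H2_rep (len e) (u e t) (ux e t) (uxx e t)"
    and H1_cont: "\<forall>t\<in>{0..T}. \<forall>v\<in>V. \<forall>e1\<in>edges_at E v. \<forall>e2\<in>edges_at E v.
                   at_vertex e1 (len e1) (u e1 t) v = at_vertex e2 (len e2) (u e2 t) v"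
    and C0: "\<forall>e\<in>E. C0_H2 T (u e) (ux e) (uxx e) (len e)"
    and C1: "\<forall>e\<in>E. C1_L2 T (u e) (ut e) (len e)"
    and pde: "\<forall>e\<in>E. \<forall>t\<in>{0<..<T}. AE x in lborel. x \<in> {0<..<len e} \<longrightarrow>
                 a e * ut e t x + b e * ux e t x - eps e * uxx e t x \<ge> 0"
    and kirchhoff: "\<forall>t\<in>{0<..<T}. \<forall>v\<in>inner_vertices V E.
                 (\<Sum>e\<in>edges_at E v. eps e * at_vertex e (len e) (ux e t) v * nE e v) = 0"
    and bdry: "\<forall>t\<in>{0<..<T}. \<forall>v\<in>bdry_vertices V E. \<forall>e\<in>edges_at E v.
                 at_vertex e (len e) (u e t) v \<ge> 0"
    and init: "\<forall>e\<in>E. \<forall>x\<in>{0<..<len e}. u e 0 x \<ge> 0"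
  shows "\<forall>t\<in>{0..T}. \<forall>e\<in>E. \<forall>x\<in>{0<..<len e}. u e t x \<ge> 0"
proof -
  have finV: "finite V" and EV: "E \<subseteq> V \<times> V" using net unfolding network_def by auto
  have finE: "finite E" using finite_subset[OF EV] finV by auto
  have lpos: "0 < len e" if "e \<in> E" for e using params that by blast
  have apos: "0 < a e" if "e \<in> E" for e using params that by blast
  have epsnn: "0 \<le> eps e" if "e \<in> E" for e using params that by force
  have H2e: "H2_rep (len e) (u e t) (ux e t) (uxx e t)" if "e \<in> E" "t \<in> {0..T}" for e t
    using H2 that by blast
  have uc: "continuous_on {0..len e} (u e t)" if "e \<in> E" "t \<in> {0..T}" for e t
    by (rule H2_cont(1)[OF H2e[OF that]])
  have C1e: "C1_L2 T (u e) (ut e) (len e)" if "e \<in> E" for e using C1 that by blast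
  define En where "En t = (\<Sum>e\<in>E. a e * (LINT x:{0..len e}|lborel. Phi (u e t x)))" for t
  have E0: "En 0 \<le> 0"
    unfolding En_def
  proof (rule sum_nonpos)
    fix e assume e: "e \<in> E"
    have "0 \<in> {0..T}" using Tpos by simp
    have "(LINT x:{0..len e}|lborel. Phi (u e 0 x)) \<le> 0"
      by (rule lint_Phi_init[OF uc[OF e \<open>0 \<in> {0..T}\<close>]]) (use init e in blast)
    then show "a e * (LINT x:{0..len e}|lborel. Phi (u e 0 x)) \<le> 0"
      using apos[OF e] by (simp add: mult_nonneg_nonpos)
  qed
  have Ec: "continuous_on {0..T} En"
    unfolding continuous_on_def
  proof
    fix s assume s: "s \<in> {0..T}"
    define C where "C t = (\<Sum>e\<in>E. a e * (LINT x:{0..len e}|lborel. \<bar>u e t x - u e s x\<bar>))" for t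
    have "(C \<longlongrightarrow> (\<Sum>e\<in>E. a e * 0)) (at s within {0..T})"
      unfolding C_def
    proof (rule tendsto_sum)
      fix e assume e: "e \<in> E"
      show "((\<lambda>t. a e * (LINT x:{0..len e}|lborel. \<bar>u e t x - u e s x\<bar>)) \<longlongrightarrow> a e * 0) (at s within {0..T})"
        by (rule tendsto_mult[OF tendsto_const L1_cont[OF C1e[OF e] s lpos[OF e]]])
    qed
    then have Clim: "(C \<longlongrightarrow> 0) (at s within {0..T})" by simp
    have bnd: "\<bar>En t - En s\<bar> \<le> C t" if t: "t \<in> {0..T}" for t
    proof -
      have "En t - En s = (\<Sum>e\<in>E. a e * ((LINT x:{0..len e}|lborel. Phi (u e t x)) - (LINT x:{0..len e}|lborel. Phi (u e s x))))"
        unfolding En_def by (simp add: sum_subtractf right_diff_distrib)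
      also have "\<bar>\<dots>\<bar> \<le> (\<Sum>e\<in>E. \<bar>a e * ((LINT x:{0..len e}|lborel. Phi (u e t x)) - (LINT x:{0..len e}|lborel. Phi (u e s x)))\<bar>)"
        by (rule sum_abs)
      also have "\<dots> \<le> C t"
        unfolding C_def
      proof (rule sum_mono)
        fix e assume e: "e \<in> E"
        have "\<bar>(LINT x:{0..len e}|lborel. Phi (u e t x)) - (LINT x:{0..len e}|lborel. Phi (u e s x))\<bar>
            \<le> (LINT x:{0..len e}|lborel. \<bar>u e t x - u e s x\<bar>)"
          by (rule lint_Phi_lip[OF uc[OF e t] uc[OF e s]])
        then show "\<bar>a e * ((LINT x:{0..len e}|lborel. Phi (u e t x)) - (LINT x:{0..len e}|lborel. Phi (u e s x)))\<bar>
            \<le> a e * (LINT x:{0..len e}|lborel. \<bar>u e t x - u e s x\<bar>)"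
          using apos[OF e] by (simp add: abs_mult mult_left_mono)
      qed
      finally show ?thesis .
    qed
    have ev1: "eventually (\<lambda>t. \<bar>En t - En s\<bar> \<le> C t) (at s within {0..T})"
      unfolding eventually_at_filter by (rule always_eventually) (auto intro: bnd)
    have ev0: "eventually (\<lambda>t. 0 \<le> \<bar>En t - En s\<bar>) (at s within {0..T})" by simp
    have "((\<lambda>t. \<bar>En t - En s\<bar>) \<longlongrightarrow> 0) (at s within {0..T})"
      by (rule tendsto_sandwich[OF ev0 ev1 tendsto_const Clim])
    then have "((\<lambda>t. En t - En s) \<longlongrightarrow> 0) (at s within {0..T})"
      by (rule tendsto_rabs_zero_cancel)
    then show "(En \<longlongrightarrow> En s) (at s within {0..T})"
      by (rule LIM_zero_cancel)
  qed
  have dini: "\<exists>\<delta>>0. \<forall>t\<in>{0..T}. t \<noteq> s \<and> dist t s < \<delta> \<longrightarrow> t < s \<longrightarrow> En s \<le> En t + \<epsilon> * (s - t)"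
    if s: "s \<in> {0<..<T}" and e: "\<epsilon> > 0" for s \<epsilon>
  proof -
    have s': "s \<in> {0..T}" using s by auto
    define Q where "Q t = (\<Sum>e\<in>E. a e * (LINT x:{0..len e}|lborel. dPhi (u e s x) * ((u e s x - u e t x) / (s - t))))" for t
    define D where "D = (\<Sum>e\<in>E. a e * (LINT x:{0..len e}|lborel. dPhi (u e s x) * ut e s x))"
    have QD: "(Q \<longlongrightarrow> D) (at s within {0..T})"
      unfolding Q_def D_def
    proof (rule tendsto_sum)
      fix e assume e: "e \<in> E"
      show "((\<lambda>t. a e * (LINT x:{0..len e}|lborel. dPhi (u e s x) * ((u e s x - u e t x) / (s - t))))
          \<longlongrightarrow> a e * (LINT x:{0..len e}|lborel. dPhi (u e s x) * ut e s x)) (at s within {0..T})"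
        by (rule tendsto_mult[OF tendsto_const dini_edge[OF C1e[OF e] s' lpos[OF e] cont_dPhi_comp[OF uc[OF e s']] abs_dPhi]])
    qed
    have "D \<le> (\<Sum>e\<in>E. eps e * (ux e s (len e) * dPhi (u e s (len e)) - ux e s 0 * dPhi (u e s 0))
                 - b e * (Phi (u e s (len e)) - Phi (u e s 0)))"
      unfolding D_def
    proof (rule sum_mono)
      fix e assume e: "e \<in> E"
      have w: "L2on (len e) (ut e s)" by (rule C1_facts(4)[OF C1e[OF e] s' s'])
      have p: "AE x in lborel. x \<in> {0<..<len e} \<longrightarrow> a e * ut e s x + b e * ux e s x - eps e * uxx e s x \<ge> 0"
        using pde e s by blast
      show "a e * (LINT x:{0..len e}|lborel. dPhi (u e s x) * ut e s x) \<le>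
          eps e * (ux e s (len e) * dPhi (u e s (len e)) - ux e s 0 * dPhi (u e s 0))
                 - b e * (Phi (u e s (len e)) - Phi (u e s 0))"
        by (rule edge_ineq[OF lpos[OF e] epsnn[OF e] H2e[OF e s'] w p])
    qed
    also have "\<dots> = 0"
    proof (rule bdry_sum_zero[OF net balance])
      show "\<forall>v\<in>V. \<forall>e1\<in>edges_at E v. \<forall>e2\<in>edges_at E v.
          at_vertex e1 (len e1) (u e1 s) v = at_vertex e2 (len e2) (u e2 s) v"
        using H1_cont s' by blast
      show "\<forall>v\<in>inner_vertices V E. (\<Sum>e\<in>edges_at E v. eps e * at_vertex e (len e) (ux e s) v * nE e v) = 0"
        using kirchhoff s by blast
      show "\<forall>v\<in>bdry_vertices V E. \<forall>e\<in>edges_at E v. 0 \<le> at_vertex e (len e) (u e s) v"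
        using bdry s by blast
    qed
    finally have "D < \<epsilon>" using e by simp
    then have "eventually (\<lambda>t. Q t < \<epsilon>) (at s within {0..T})" by (rule order_tendstoD(2)[OF QD])
    then obtain \<delta> where d: "\<delta> > 0" and dd: "\<forall>t\<in>{0..T}. t \<noteq> s \<and> dist t s < \<delta> \<longrightarrow> Q t < \<epsilon>"
      unfolding eventually_at by blast
    show ?thesis
    proof (intro exI[of _ \<delta>] conjI ballI impI d)
      fix t assume t: "t \<in> {0..T}" "t \<noteq> s \<and> dist t s < \<delta>" "t < s"
      have Qt: "Q t < \<epsilon>" using dd t by blast
      have st: "s \<noteq> t" using t by auto
      have "En s - En t = (\<Sum>e\<in>E. a e * ((LINT x:{0..len e}|lborel. Phi (u e s x)) - (LINT x:{0..len e}|lborel. Phi (u e t x))))"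
        unfolding En_def by (simp add: sum_subtractf right_diff_distrib)
      also have "\<dots> \<le> (\<Sum>e\<in>E. a e * ((s - t) * (LINT x:{0..len e}|lborel. dPhi (u e s x) * ((u e s x - u e t x) / (s - t)))))"
      proof (rule sum_mono)
        fix e assume e: "e \<in> E"
        show "a e * ((LINT x:{0..len e}|lborel. Phi (u e s x)) - (LINT x:{0..len e}|lborel. Phi (u e t x)))
          \<le> a e * ((s - t) * (LINT x:{0..len e}|lborel. dPhi (u e s x) * ((u e s x - u e t x) / (s - t))))"
          using apos[OF e] lint_Phi_conv[OF uc[OF e s'] uc[OF e t(1)] st] by (intro mult_left_mono) auto
      qed
      also have "\<dots> = (s - t) * Q t" unfolding Q_def by (simp add: sum_distrib_left algebra_simps)
      also have "\<dots> \<le> (s - t) * \<epsilon>" using Qt t by (intro mult_left_mono) auto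
      finally show "En s \<le> En t + \<epsilon> * (s - t)" by (simp add: algebra_simps)
    qed
  qed
  have all: "\<forall>t\<in>{0..T}. En t \<le> 0" by (rule mono_arg[OF Tpos E0 Ec dini])
  show ?thesis
  proof (intro ballI)
    fix t e x assume t: "t \<in> {0..T}" and e: "e \<in> E" and x: "x \<in> {0<..<len e}"
    have nn: "\<forall>e\<in>E. 0 \<le> a e * (LINT x:{0..len e}|lborel. Phi (u e t x))"
    proof
      fix e assume e: "e \<in> E"
      have "0 \<le> (LINT x:{0..len e}|lborel. Phi (u e t x))" by (rule lint_nonneg) (rule Phi_nonneg)
      then show "0 \<le> a e * (LINT x:{0..len e}|lborel. Phi (u e t x))" using apos[OF e] by simp
    qed
    have "En t \<ge> 0" unfolding En_def by (rule sum_nonneg) (use nn in blast)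
    then have "En t = 0" using all t by force
    then have Es: "(\<Sum>e\<in>E. a e * (LINT x:{0..len e}|lborel. Phi (u e t x))) = 0"
      unfolding En_def .
    have "\<forall>e\<in>E. a e * (LINT x:{0..len e}|lborel. Phi (u e t x)) = 0"
      by (rule sum_nonneg_eq_0_iff[OF finE, THEN iffD1, OF _ Es]) (use nn in blast)
    then have "a e * (LINT x:{0..len e}|lborel. Phi (u e t x)) = 0" using e by blast
    then have "(LINT x:{0..len e}|lborel. Phi (u e t x)) = 0" using apos[OF e] by simp
    then show "u e t x \<ge> 0"
      by (rule lint_Phi_zero[OF uc[OF e t] lpos[OF e]]) (use x in auto)
  qed
qed


end
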